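(* Let $G$ be a directed graph with vertices $s,t$ and $k\ge1$. The set $U^k_{\mathrm{lr}}$ together with the relation $\preceq$ is a distributive lattice $L^*$, and for any $C_1=[X_1,\dots,X_k]$ and $C_2=[Y_1,\dots,Y_k]$ in $L^*$ its join and meet are given by $C_1\vee C_2=[S_{\max}(X_1\cup Y_1),\dots,S_{\max}(X_k\cup Y_k)]$ and $C_1\wedge C_2=[S_{\min}(X_1\cup Y_1),\dots,S_{\min}(X_k\cup Y_k)]$.
   Context: An $s$-$t$ cut of a directed graph $G$ is a set $X\subseteq E(G)$ such that removing $X$ leaves no directed $s$-$t$ path; $\Gamma_G(s,t)$ is the set of $s$-$t$ cuts of minimum cardinality $\lambda(G)$. Fix a maximum-size collection $\mathcal P$ of pairwise edge-disjoint directed $s$-$t$ paths (so $|\mathcal P|=\lambda(G)$ and each minimum $s$-$t$ cut contains exactly one edge of each path in $\mathcal P$). For $X,Y\in\Gamma_G(s,t)$, $S_{\min}(X\cup Y)$ (resp. $S_{\max}(X\cup Y)$) is the set consisting, for each $p\in\mathcal P$, of the edge of $(X\cup Y)\cap p$ occurring first (resp. last) along $p$. For $s$-$t$ cuts $X,Y$, $X\le Y$ means every directed $s$-$t$ path in $G$ meets an edge of $X$ at or before an edge of $Y$. $U^k_{\mathrm{lr}}$ is the set of $k$-tuples $[X_1,\dots,X_k]$ of elements of $\Gamma_G(s,t)$ with $X_i\le X_j$ for all $i<j$; for $C_1=[X_i]_i,C_2=[Y_i]_i\in U^k_{\mathrm{lr}}$, $C_1\preceq C_2$ iff $X_i\le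 Y_i$ for all $i\in\{1,\dots,k\}$. *)

theory Defs
  imports "Graph_Theory.Digraph" "Graph_Theory.Arc_Walk" "HOL-Algebra.Lattice"
begin

text \<open>Directed (multi)graphs are represented by the Graph_Theory record pre_digraph
  (vertices, arcs, tail, head); directed s-t paths are pre_digraph.apath
  (arc lists forming a walk with pairwise distinct vertices).\<close>

definition st_cut :: "('v,'e) pre_digraph \<Rightarrow> 'v \<Rightarrow> 'v \<Rightarrow> 'e set \<Rightarrow> bool" where
  "st_cut G s t X \<equiv> X \<subseteq> arcs G \<and> (\<forall>p. pre_digraph.apath G s p t \<longrightarrow> set p \<inter> X \<noteq> {})"

definition min_cut_size :: "('v,'e) pre_digraph \<Rightarrow> 'v \<Rightarrow> 'v \<Rightarrow> nat" where
  "min_cut_size G s t = Min (card ` {X. st_cut G s t X})"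

definition min_cuts :: "('v,'e) pre_digraph \<Rightarrow> 'v \<Rightarrow> 'v \<Rightarrow> 'e set set" where
  "min_cuts G s t = {X. st_cut G s t X \<and> card X = min_cut_size G s t}"

definition edge_disjoint_paths :: "('v,'e) pre_digraph \<Rightarrow> 'v \<Rightarrow> 'v \<Rightarrow> 'e list set \<Rightarrow> bool" where
  "edge_disjoint_paths G s t P \<equiv>
     (\<forall>p\<in>P. pre_digraph.apath G s p t) \<and> (\<forall>p\<in>P. \<forall>q\<in>P. p \<noteq> q \<longrightarrow> set p \<inter> set q = {})"

definition max_edge_disjoint_paths :: "('v,'e) pre_digraph \<Rightarrow> 'v \<Rightarrow> 'v \<Rightarrow> 'e list set \<Rightarrow> bool" where
  "max_edge_disjoint_paths G s t P \<equiv> finite P \<and> edge_disjoint_paths G s t P \<and>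
     (\<forall>Q. finite Q \<and> edge_disjoint_paths G s t Q \<longrightarrow> card Q \<le> card P)"

definition first_on :: "'e list \<Rightarrow> 'e set \<Rightarrow> 'e" where
  "first_on p A = p ! (LEAST i. i < length p \<and> p ! i \<in> A)"

definition last_on :: "'e list \<Rightarrow> 'e set \<Rightarrow> 'e" where
  "last_on p A = p ! (GREATEST i. i < length p \<and> p ! i \<in> A)"

definition S_min :: "'e list set \<Rightarrow> 'e set \<Rightarrow> 'e set" where
  "S_min P A = (\<lambda>p. first_on p A) ` P"

definition S_max :: "'e list set \<Rightarrow> 'e set \<Rightarrow> 'e set" where
  "S_max P A = (\<lambda>p. last_on p A) ` P"

definition cut_le :: "('v,'e) pre_digraph \<Rightarrow> 'v \<Rightarrow> 'v \<Rightarrow> 'e set \<Rightarrow> 'e set \<Rightarrow> bool" where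
  "cut_le G s t X Y \<equiv> \<forall>p. pre_digraph.apath G s p t \<longrightarrow>
     (LEAST i. i < length p \<and> p ! i \<in> X) \<le> (LEAST j. j < length p \<and> p ! j \<in> Y)"

definition U_lr :: "('v,'e) pre_digraph \<Rightarrow> 'v \<Rightarrow> 'v \<Rightarrow> nat \<Rightarrow> 'e set list set" where
  "U_lr G s t k = {C. length C = k \<and> set C \<subseteq> min_cuts G s t \<and>
     (\<forall>i j. i < j \<and> j < k \<longrightarrow> cut_le G s t (C ! i) (C ! j))}"

definition tuple_le :: "('v,'e) pre_digraph \<Rightarrow> 'v \<Rightarrow> 'v \<Rightarrow> nat \<Rightarrow> 'e set list \<Rightarrow> 'e set list \<Rightarrow> bool" where
  "tuple_le G s t k C1 C2 \<equiv> (\<forall>i < k. cut_le G s t (C1 ! i) (C2 ! i))"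

definition L_star :: "('v,'e) pre_digraph \<Rightarrow> 'v \<Rightarrow> 'v \<Rightarrow> nat \<Rightarrow> 'e set list gorder" where
  "L_star G s t k = \<lparr> carrier = U_lr G s t k, eq = (=), le = tuple_le G s t k \<rparr>"

definition distributive_lattice :: "('a, 'b) gorder_scheme \<Rightarrow> bool" where
  "distributive_lattice L \<equiv> lattice L \<and>
     (\<forall>x\<in>carrier L. \<forall>y\<in>carrier L. \<forall>z\<in>carrier L.
        x \<sqinter>\<^bsub>L\<^esub> (y \<squnion>\<^bsub>L\<^esub> z) = (x \<sqinter>\<^bsub>L\<^esub> y) \<squnion>\<^bsub>L\<^esub> (x \<sqinter>\<^bsub>L\<^esub> z))"

end

theory Submission
  imports Defs
begin


definition bal :: "('v,'e) pre_digraph \<Rightarrow> 'e set \<Rightarrow> 'v \<Rightarrow> int" where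
  "bal H F v = int (card {e\<in>F. tail H e = v}) - int (card {e\<in>F. head H e = v})"

lemma bal_insert:
  assumes "finite S" "e \<notin> S"
  shows "bal H (insert e S) v = bal H S v + (if tail H e = v then 1 else 0) - (if head H e = v then 1 else 0)"
proof -
  have 1: "{x\<in>insert e S. tail H x = v} = (if tail H e = v then insert e {x\<in>S. tail H x = v} else {x\<in>S. tail H x = v})" by auto
  have 2: "{x\<in>insert e S. head H x = v} = (if head H e = v then insert e {x\<in>S. head H x = v} else {x\<in>S. head H x = v})" by auto
  show ?thesis unfolding bal_def 1 2 using assms by (auto simp: card_insert_disjoint)
qed

lemma bal_empty[simp]: "bal H {} v = 0" by (simp add: bal_def)

lemma bal_trail:
  assumes "pre_digraph.cas H u p w" "distinct p"
  shows "bal H (set p) v = (if v = u then 1 else 0) - (if v = w then 1 else 0)"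
  using assms
proof (induction p arbitrary: u)
  case Nil
  then show ?case by (simp add: pre_digraph.cas.simps)
next
  case (Cons e p)
  then have c: "tail H e = u" "pre_digraph.cas H (head H e) p w" by (auto simp: pre_digraph.cas.simps)
  have IH: "bal H (set p) v = (if v = head H e then 1 else 0) - (if v = w then 1 else 0)"
    using Cons c by auto
  have "bal H (set (e#p)) v = bal H (set p) v + (if tail H e = v then 1 else 0) - (if head H e = v then 1 else 0)"
    using Cons.prems by (simp add: bal_insert)
  then show ?case using IH c by auto
qed

lemma bal_Un:
  assumes "finite A" "finite B" "A \<inter> B = {}"
  shows "bal H (A \<union> B) v = bal H A v + bal H B v"
proof -
  have 1: "{e\<in>A\<union>B. tail H e = v} = {e\<in>A. tail H e = v} \<union> {e\<in>B. tail H e = v}" by auto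
  have 2: "{e\<in>A\<union>B. head H e = v} = {e\<in>A. head H e = v} \<union> {e\<in>B. head H e = v}" by auto
  show ?thesis unfolding bal_def 1 2 using assms
    by (subst card_Un_disjoint, auto)+
qed

lemma bal_Diff:
  assumes "finite A" "B \<subseteq> A"
  shows "bal H (A - B) v = bal H A v - bal H B v"
proof -
  have "A = (A - B) \<union> B" using assms by auto
  then have "bal H A v = bal H (A - B) v + bal H B v"
    using assms bal_Un[of "A - B" B H v] by (metis Diff_disjoint Int_commute finite_Diff finite_subset)
  then show ?thesis by simp
qed


lemma card_split:
  assumes "finite A"
  shows "card A = card {x\<in>A. Q x} + card {x\<in>A. \<not> Q x}"
proof -
  have "A = {x\<in>A. Q x} \<union> {x\<in>A. \<not> Q x}" by auto
  then have "card A = card ({x\<in>A. Q x} \<union> {x\<in>A. \<not> Q x})" by simp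
  also have "\<dots> = card {x\<in>A. Q x} + card {x\<in>A. \<not> Q x}"
    by (rule card_Un_disjoint) (use assms in auto)
  finally show ?thesis .
qed

lemma card_tail_sum:
  assumes "finite S" "finite F"
  shows "(\<Sum>v\<in>S. card {e\<in>F. f e = v}) = card {e\<in>F. f e \<in> S}"
proof -
  have "{e\<in>F. f e \<in> S} = (\<Union>v\<in>S. {e\<in>F. f e = v})" by auto
  moreover have "card (\<Union>v\<in>S. {e\<in>F. f e = v}) = (\<Sum>v\<in>S. card {e\<in>F. f e = v})"
    by (rule card_UN_disjoint) (use assms in auto)
  ultimately show ?thesis by simp
qed

lemma bal_sum:
  assumes "finite S" "finite F"
  shows "(\<Sum>v\<in>S. bal H F v) = int (card {e\<in>F. tail H e \<in> S \<and> head H e \<notin> S})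
     - int (card {e\<in>F. head H e \<in> S \<and> tail H e \<notin> S})"
proof -
  have "(\<Sum>v\<in>S. bal H F v) = int (\<Sum>v\<in>S. card {e\<in>F. tail H e = v}) - int (\<Sum>v\<in>S. card {e\<in>F. head H e = v})"
    by (simp add: bal_def sum_subtractf)
  also have "\<dots> = int (card {e\<in>F. tail H e \<in> S}) - int (card {e\<in>F. head H e \<in> S})"
    using assms by (simp add: card_tail_sum)
  also have "card {e\<in>F. tail H e \<in> S} = card {e\<in>F. tail H e \<in> S \<and> head H e \<in> S} + card {e\<in>F. tail H e \<in> S \<and> head H e \<notin> S}"
  proof -
    have "card {e\<in>F. tail H e \<in> S} = card {x\<in>{e\<in>F. tail H e \<in> S}. head H x \<in> S} + card {x\<in>{e\<in>F. tail H e \<in> S}. \<not> head H x \<in> S}"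
      by (rule card_split) (use assms in simp)
    moreover have "{x\<in>{e\<in>F. tail H e \<in> S}. head H x \<in> S} = {e\<in>F. tail H e \<in> S \<and> head H e \<in> S}" by auto
    moreover have "{x\<in>{e\<in>F. tail H e \<in> S}. \<not> head H x \<in> S} = {e\<in>F. tail H e \<in> S \<and> head H e \<notin> S}" by auto
    ultimately show ?thesis by simp
  qed
  also have "card {e\<in>F. head H e \<in> S} = card {e\<in>F. tail H e \<in> S \<and> head H e \<in> S} + card {e\<in>F. head H e \<in> S \<and> tail H e \<notin> S}"
  proof -
    have "card {e\<in>F. head H e \<in> S} = card {x\<in>{e\<in>F. head H e \<in> S}. tail H x \<in> S} + card {x\<in>{e\<in>F. head H e \<in> S}. \<not> tail H x \<in> S}"
      by (rule card_split) (use assms in simp)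
    moreover have "{x\<in>{e\<in>F. head H e \<in> S}. tail H x \<in> S} = {e\<in>F. tail H e \<in> S \<and> head H e \<in> S}" by auto
    moreover have "{x\<in>{e\<in>F. head H e \<in> S}. \<not> tail H x \<in> S} = {e\<in>F. head H e \<in> S \<and> tail H e \<notin> S}" by auto
    ultimately show ?thesis by simp
  qed
  finally show ?thesis by simp
qed

lemma cas_exit:
  assumes "pre_digraph.cas H u p w" "u \<in> S" "w \<notin> S"
  shows "\<exists>e\<in>set p. tail H e \<in> S \<and> head H e \<notin> S"
  using assms
proof (induction p arbitrary: u)
  case Nil
  then show ?case by (simp add: pre_digraph.cas.simps)
next
  case (Cons e p)
  then have c: "tail H e = u" "pre_digraph.cas H (head H e) p w" by (auto simp: pre_digraph.cas.simps)
  show ?case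
  proof (cases "head H e \<in> S")
    case True
    then show ?thesis using Cons.IH[OF c(2) True Cons.prems(3)] by auto
  next
    case False
    then show ?thesis using c Cons.prems by auto
  qed
qed


locale mg = fin_digraph G for G :: "('v,'e) pre_digraph" +
  fixes s t :: 'v and P :: "'e list set"
  assumes s_in: "s \<in> verts G" and t_in: "t \<in> verts G" and s_ne_t: "s \<noteq> t"
    and maxP: "max_edge_disjoint_paths G s t P"
begin

lemma finP: "finite P" using maxP by (simp add: max_edge_disjoint_paths_def)
lemma P_apath: "p \<in> P \<Longrightarrow> apath s p t"
  using maxP by (simp add: max_edge_disjoint_paths_def edge_disjoint_paths_def)
lemma P_disj: "p \<in> P \<Longrightarrow> q \<in> P \<Longrightarrow> p \<noteq> q \<Longrightarrow> set p \<inter> set q = {}"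
  using maxP by (simp add: max_edge_disjoint_paths_def edge_disjoint_paths_def)
lemma P_max: "finite Q \<Longrightarrow> edge_disjoint_paths G s t Q \<Longrightarrow> card Q \<le> card P"
  using maxP by (simp add: max_edge_disjoint_paths_def)
lemma P_distinct: "p \<in> P \<Longrightarrow> distinct p"
  using P_apath by (auto simp: apath_def intro: distinct_verts_imp_distinct)
lemma P_ne: "p \<in> P \<Longrightarrow> p \<noteq> []"
  using P_apath[of p] s_ne_t by (auto simp: apath_Nil_iff)
lemma P_arcs: "p \<in> P \<Longrightarrow> set p \<subseteq> arcs G"
  using P_apath by (auto simp: apath_def awalk_def)

lemma walk_hits:
  assumes "st_cut G s t X" "awalk s w t"
  shows "set w \<inter> X \<noteq> {}"
proof -
  have "apath s (awalk_to_apath w) t" using assms(2) by (rule apath_awalk_to_apath)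
  then have "set (awalk_to_apath w) \<inter> X \<noteq> {}" using assms(1) by (simp add: st_cut_def)
  moreover have "set (awalk_to_apath w) \<subseteq> set w" using assms(2) by (rule awalk_to_apath_subset)
  ultimately show ?thesis by blast
qed

lemma cut_card_ge:
  assumes "st_cut G s t X"
  shows "card P \<le> card X"
proof -
  have "\<forall>p\<in>P. \<exists>e. e \<in> X \<inter> set p"
  proof
    fix p assume "p \<in> P"
    then have "set p \<inter> X \<noteq> {}" using assms P_apath by (auto simp: st_cut_def)
    then show "\<exists>e. e \<in> X \<inter> set p" by blast
  qed
  then obtain f where f: "\<And>p. p \<in> P \<Longrightarrow> f p \<in> X \<inter> set p" by metis
  have "inj_on f P"
  proof (rule inj_onI)
    fix p q assume "p \<in> P" "q \<in> P" "f p = f q"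
    then show "p = q" using f[of p] f[of q] P_disj[of p q] by auto
  qed
  then have "card P = card (f ` P)" by (simp add: card_image)
  also have "\<dots> \<le> card X"
    using assms f by (intro card_mono) (auto simp: st_cut_def intro: finite_subset[OF _ finite_arcs])
  finally show ?thesis .
qed

definition isflow :: "'e set \<Rightarrow> int \<Rightarrow> bool" where
  "isflow F k \<longleftrightarrow> F \<subseteq> arcs G \<and> (\<forall>v. bal G F v = k * ((if v = s then 1 else 0) - (if v = t then 1 else 0)))"

end

context mg begin
lemma flow_paths:
  assumes "finite Q" "\<forall>p\<in>Q. apath s p t" "\<forall>p\<in>Q. \<forall>q\<in>Q. p \<noteq> q \<longrightarrow> set p \<inter> set q = {}"
  shows "isflow (\<Union>(set ` Q)) (int (card Q))"
  using assms
proof (induction Q rule: finite_induct)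
  case empty
  then show ?case by (simp add: isflow_def)
next
  case (insert p Q)
  have IH: "isflow (\<Union>(set ` Q)) (int (card Q))" using insert by auto
  have ap: "apath s p t" using insert by auto
  have dp: "distinct p" using ap by (auto simp: apath_def intro: distinct_verts_imp_distinct)
  have cp: "cas s p t" using ap by (auto simp: apath_def awalk_def)
  have disj: "set p \<inter> \<Union>(set ` Q) = {}" using insert by fastforce
  show ?case unfolding isflow_def
  proof (intro conjI allI)
    show "\<Union>(set ` insert p Q) \<subseteq> arcs G" using IH ap by (auto simp: isflow_def apath_def)
    fix v
    have a: "bal G (set p \<union> \<Union>(set ` Q)) v = bal G (set p) v + bal G (\<Union>(set ` Q)) v"
      using disj insert(1) by (intro bal_Un) auto
    have b: "bal G (set p) v = (if v = s then 1 else 0) - (if v = t then 1 else 0)"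
      using bal_trail[OF cp dp] by simp
    have c: "bal G (\<Union>(set ` Q)) v = int (card Q) * ((if v = s then 1 else 0) - (if v = t then 1 else 0))"
      using IH by (simp add: isflow_def)
    show "bal G (\<Union>(set ` insert p Q)) v = int (card (insert p Q)) * ((if v = s then 1 else 0) - (if v = t then 1 else 0))"
      using a b c insert(1,2) by (simp add: algebra_simps)
  qed
qed
end

context mg begin
lemma flow_decomp:
  assumes "isflow F (int n)"
  shows "\<exists>Q. finite Q \<and> card Q = n \<and> edge_disjoint_paths G s t Q \<and> (\<forall>q\<in>Q. set q \<subseteq> F)"
  using assms
proof (induction n arbitrary: F)
  case 0
  then show ?case by (intro exI[of _ "{}"]) (simp add: edge_disjoint_paths_def)
next
  case (Suc n)
  have FA: "F \<subseteq> arcs G" and balF: "\<And>v. bal G F v = int (Suc n) * ((if v = s then 1 else 0) - (if v = t then 1 else 0))"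
    using Suc.prems by (auto simp: isflow_def)
  have finF: "finite F" using FA finite_arcs by (rule finite_subset)
  define R where "R = {v. \<exists>w. awalk s w v \<and> set w \<subseteq> F}"
  have sR: "s \<in> R" unfolding R_def using s_in by (intro CollectI exI[of _ "[]"]) (simp add: awalk_Nil_iff)
  have tR: "t \<in> R"
  proof (rule ccontr)
    assume tn: "t \<notin> R"
    have Rv: "R \<subseteq> verts G" unfolding R_def by (auto dest: awalk_last_in_verts)
    then have finR: "finite R" using finite_verts by (rule finite_subset)
    have empty: "{e\<in>F. tail G e \<in> R \<and> head G e \<notin> R} = {}"
    proof -
      { fix e assume e: "e \<in> F" "tail G e \<in> R" "head G e \<notin> R"
        then obtain w where w: "awalk s w (tail G e)" "set w \<subseteq> F" unfolding R_def by auto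
        have we: "awalk s (w @ [e]) (head G e)" using w e FA by (auto simp: awalk_simps)
        have "head G e \<in> R" unfolding R_def using we w e by (intro CollectI exI[of _ "w @ [e]"]) auto
        with e have False by simp }
      then show ?thesis by blast
    qed
    have "(\<Sum>v\<in>R. bal G F v) = int (Suc n)"
    proof -
      have "(\<Sum>v\<in>R. bal G F v) = (\<Sum>v\<in>R. int (Suc n) * ((if v = s then 1 else 0) - (if v = t then 1 else 0)))"
        using balF by simp
      also have "\<dots> = int (Suc n) * ((\<Sum>v\<in>R. (if v = s then 1 else 0)) - (\<Sum>v\<in>R. (if v = t then 1 else 0)))"
        by (simp only: sum_subtractf[symmetric] sum_distrib_left)
      also have "\<dots> = int (Suc n)" using sR tn finR by simp
      finally show ?thesis .
    qed
    moreover have "(\<Sum>v\<in>R. bal G F v) \<le> 0" using bal_sum[OF finR finF, of G] empty by simp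
    ultimately show False by simp
  qed
  then obtain w where w: "awalk s w t" "set w \<subseteq> F" unfolding R_def by auto
  define p where "p = awalk_to_apath w"
  have ap: "apath s p t" unfolding p_def by (rule apath_awalk_to_apath[OF w(1)])
  have pF: "set p \<subseteq> F" unfolding p_def using awalk_to_apath_subset[OF w(1)] w(2) by blast
  have dp: "distinct p" using ap by (auto simp: apath_def intro: distinct_verts_imp_distinct)
  have cp: "cas s p t" using ap by (auto simp: apath_def awalk_def)
  have pne: "p \<noteq> []" using ap s_ne_t by (auto simp: apath_def awalk_def)
  have "isflow (F - set p) (int n)"
    unfolding isflow_def
  proof (intro conjI allI)
    show "F - set p \<subseteq> arcs G" using FA by auto
    fix v
    have "bal G (F - set p) v = bal G F v - bal G (set p) v" using finF pF by (rule bal_Diff)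
    then show "bal G (F - set p) v = int n * ((if v = s then 1 else 0) - (if v = t then 1 else 0))"
      using balF[of v] bal_trail[OF cp dp, of v] by (auto simp: algebra_simps)
  qed
  then obtain Q where Q: "finite Q" "card Q = n" "edge_disjoint_paths G s t Q" "\<forall>q\<in>Q. set q \<subseteq> F - set p"
    using Suc.IH by blast
  have pQ: "p \<notin> Q"
  proof
    assume "p \<in> Q"
    then have "set p \<subseteq> F - set p" using Q(4) by auto
    with pne show False by (cases p) auto
  qed
  show ?case
  proof (intro exI[of _ "insert p Q"] conjI)
    show "finite (insert p Q)" using Q by simp
    show "card (insert p Q) = Suc n" using Q pQ by simp
    show "\<forall>q\<in>insert p Q. set q \<subseteq> F" using Q pF by auto
    show "edge_disjoint_paths G s t (insert p Q)"
      using Q(3,4) ap unfolding edge_disjoint_paths_def by fastforce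
  qed
qed

end

context mg begin

definition res :: "'e set \<Rightarrow> ('v, 'e \<times> bool) pre_digraph" where
  "res F = \<lparr>verts = verts G, arcs = ((arcs G - F) \<times> {True}) \<union> (F \<times> {False}),
     tail = (\<lambda>(e,b). if b then tail G e else head G e),
     head = (\<lambda>(e,b). if b then head G e else tail G e)\<rparr>"

lemma res_simps[simp]:
  "verts (res F) = verts G"
  "arcs (res F) = ((arcs G - F) \<times> {True}) \<union> (F \<times> {False})"
  "tail (res F) (e, True) = tail G e" "head (res F) (e, True) = head G e"
  "tail (res F) (e, False) = head G e" "head (res F) (e, False) = tail G e"
  by (auto simp: res_def)

lemma res_wf: "F \<subseteq> arcs G \<Longrightarrow> wf_digraph (res F)"
  by unfold_locales auto

lemma bal_res_T:
  assumes "finite A"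
  shows "bal (res F) ((\<lambda>e. (e, True)) ` A) v = bal G A v"
proof -
  have 1: "{x\<in>(\<lambda>e. (e, True)) ` A. tail (res F) x = v} = (\<lambda>e. (e, True)) ` {e\<in>A. tail G e = v}" by auto
  have 2: "{x\<in>(\<lambda>e. (e, True)) ` A. head (res F) x = v} = (\<lambda>e. (e, True)) ` {e\<in>A. head G e = v}" by auto
  show ?thesis unfolding bal_def 1 2 by (simp add: card_image inj_on_def)
qed

lemma bal_res_F:
  assumes "finite A"
  shows "bal (res F) ((\<lambda>e. (e, False)) ` A) v = - bal G A v"
proof -
  have 1: "{x\<in>(\<lambda>e. (e, False)) ` A. tail (res F) x = v} = (\<lambda>e. (e, False)) ` {e\<in>A. head G e = v}" by auto
  have 2: "{x\<in>(\<lambda>e. (e, False)) ` A. head (res F) x = v} = (\<lambda>e. (e, False)) ` {e\<in>A. tail G e = v}" by auto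
  show ?thesis unfolding bal_def 1 2 by (simp add: card_image inj_on_def)
qed

lemma augment:
  assumes fl: "isflow F k" and r: "pre_digraph.apath (res F) s r t"
  shows "isflow ((F - {e. (e, False) \<in> set r}) \<union> {e. (e, True) \<in> set r}) (k + 1)"
proof -
  have FA: "F \<subseteq> arcs G" using fl by (simp add: isflow_def)
  interpret R: wf_digraph "res F" using res_wf[OF FA] .
  have rw: "R.awalk s r t" using r by (simp add: R.apath_def)
  have dr: "distinct r" using r by (auto simp: R.apath_def intro: R.distinct_verts_imp_distinct)
  have cr: "R.cas s r t" using rw by (simp add: R.awalk_def)
  have rarcs: "set r \<subseteq> arcs (res F)" using rw by (simp add: R.awalk_def)
  define A where "A = {e. (e, True) \<in> set r}"
  define B where "B = {e. (e, False) \<in> set r}"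
  have AF: "A \<subseteq> arcs G - F" using rarcs unfolding A_def by auto
  have BF: "B \<subseteq> F" using rarcs unfolding B_def by auto
  have finA: "finite A" using AF finite_arcs finite_subset by (metis Diff_subset subset_trans)
  have finF: "finite F" using FA finite_arcs by (rule finite_subset)
  have finB: "finite B" using BF finF by (rule finite_subset)
  have sr: "set r = (\<lambda>e. (e, True)) ` A \<union> (\<lambda>e. (e, False)) ` B"
  proof (intro equalityI subsetI)
    fix x assume "x \<in> set r"
    moreover obtain e b where x: "x = (e, b)" by (cases x)
    ultimately show "x \<in> (\<lambda>e. (e, True)) ` A \<union> (\<lambda>e. (e, False)) ` B"
      unfolding A_def B_def by (cases b) auto
  next
    fix x assume "x \<in> (\<lambda>e. (e, True)) ` A \<union> (\<lambda>e. (e, False)) ` B"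
    then show "x \<in> set r" unfolding A_def B_def by auto
  qed
  show ?thesis unfolding isflow_def A_def[symmetric] B_def[symmetric]
  proof (intro conjI allI)
    show "F - B \<union> A \<subseteq> arcs G" using FA AF by auto
    fix v
    have "bal (res F) (set r) v = bal (res F) ((\<lambda>e. (e, True)) ` A) v + bal (res F) ((\<lambda>e. (e, False)) ` B) v"
      unfolding sr using finA finB by (intro bal_Un) auto
    also have "\<dots> = bal G A v - bal G B v" using finA finB by (simp add: bal_res_T bal_res_F)
    finally have 1: "bal G A v - bal G B v = (if v = s then 1 else 0) - (if v = t then 1 else 0)"
      using bal_trail[OF cr dr, of v] by simp
    have "bal G (F - B \<union> A) v = bal G (F - B) v + bal G A v"
      using finF finA AF by (intro bal_Un) auto
    also have "\<dots> = bal G F v - bal G B v + bal G A v" using finF BF by (simp add: bal_Diff)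
    finally have 2: "bal G (F - B \<union> A) v = bal G F v - bal G B v + bal G A v" .
    have 3: "bal G F v = k * ((if v = s then 1 else 0) - (if v = t then 1 else 0))"
      using fl by (simp add: isflow_def)
    show "bal G (F - B \<union> A) v = (k + 1) * ((if v = s then 1 else 0) - (if v = t then 1 else 0))"
      using 1 2 3 by (simp add: algebra_simps)
  qed
qed

end

context mg begin

lemma menger: "\<exists>C. st_cut G s t C \<and> card C = card P"
proof -
  define F0 where "F0 = \<Union>(set ` P)"
  have fl: "isflow F0 (int (card P))" unfolding F0_def
    using finP P_apath P_disj by (intro flow_paths) auto
  have FA: "F0 \<subseteq> arcs G" using fl by (simp add: isflow_def)
  have finF: "finite F0" using FA finite_arcs by (rule finite_subset)
  interpret R: wf_digraph "res F0" using res_wf[OF FA] .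
  have nreach: "\<not> R.awalk s w t" for w
  proof
    assume "R.awalk s w t"
    then have "R.apath s (R.awalk_to_apath w) t" by (rule R.apath_awalk_to_apath)
    then have "isflow ((F0 - {e. (e, False) \<in> set (R.awalk_to_apath w)}) \<union> {e. (e, True) \<in> set (R.awalk_to_apath w)}) (int (card P) + 1)"
      by (rule augment[OF fl])
    then have "isflow ((F0 - {e. (e, False) \<in> set (R.awalk_to_apath w)}) \<union> {e. (e, True) \<in> set (R.awalk_to_apath w)}) (int (Suc (card P)))"
      by (simp add: add.commute)
    then obtain Q where Q: "finite Q" "card Q = Suc (card P)" "edge_disjoint_paths G s t Q"
      using flow_decomp by blast
    then show False using P_max[of Q] by simp
  qed
  define S where "S = {v. \<exists>w. R.awalk s w v}"
  have sS: "s \<in> S" unfolding S_def using s_in by (intro CollectI exI[of _ "[]"]) (simp add: R.awalk_Nil_iff)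
  have tS: "t \<notin> S" unfolding S_def using nreach by auto
  have SV: "S \<subseteq> verts G" unfolding S_def by (auto dest: R.awalk_last_in_verts)
  have finS: "finite S" using SV finite_verts by (rule finite_subset)
  have i: "e \<in> F0" if th: "e \<in> arcs G" "tail G e \<in> S" "head G e \<notin> S" for e
  proof (rule ccontr)
    assume "e \<notin> F0"
    obtain w where w: "R.awalk s w (tail G e)" using th unfolding S_def by auto
    have "(e, True) \<in> arcs (res F0)" using th \<open>e \<notin> F0\<close> by simp
    then have "R.awalk s (w @ [(e, True)]) (head G e)" using w by (auto simp: R.awalk_simps)
    then have "head G e \<in> S" unfolding S_def by blast
    with th show False by simp
  qed
  have ii: "tail G e \<in> S" if th: "e \<in> F0" "head G e \<in> S" for e
  proof -
    obtain w where w: "R.awalk s w (head G e)" using th unfolding S_def by auto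
    have "(e, False) \<in> arcs (res F0)" using th by simp
    then have "R.awalk s (w @ [(e, False)]) (tail G e)" using w th FA by (auto simp: R.awalk_simps)
    then show "tail G e \<in> S" unfolding S_def by blast
  qed
  define C where "C = {e\<in>arcs G. tail G e \<in> S \<and> head G e \<notin> S}"
  have cut: "st_cut G s t C" unfolding st_cut_def
  proof (intro conjI allI impI)
    show "C \<subseteq> arcs G" unfolding C_def by auto
    fix p assume "apath s p t"
    then have "cas s p t" "set p \<subseteq> arcs G" by (auto simp: apath_def awalk_def)
    then obtain e where "e \<in> set p" "tail G e \<in> S" "head G e \<notin> S" using cas_exit[of G s p t S] sS tS by blast
    then show "set p \<inter> C \<noteq> {}" unfolding C_def using \<open>set p \<subseteq> arcs G\<close> by blast
  qed
  have "(\<Sum>v\<in>S. bal G F0 v) = int (card P)"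
  proof -
    have "(\<Sum>v\<in>S. bal G F0 v) = (\<Sum>v\<in>S. int (card P) * ((if v = s then 1 else 0) - (if v = t then 1 else 0)))"
      using fl by (simp add: isflow_def)
    also have "\<dots> = int (card P) * ((\<Sum>v\<in>S. (if v = s then 1 else 0)) - (\<Sum>v\<in>S. (if v = t then 1 else 0)))"
      by (simp only: sum_subtractf[symmetric] sum_distrib_left)
    also have "\<dots> = int (card P)" using sS tS finS by simp
    finally show ?thesis .
  qed
  moreover have "{e\<in>F0. tail G e \<in> S \<and> head G e \<notin> S} = C" unfolding C_def using i FA by auto
  moreover have "{e\<in>F0. head G e \<in> S \<and> tail G e \<notin> S} = {}" using ii by auto
  ultimately have "card C = card P" using bal_sum[OF finS finF, of G] by simp
  with cut show ?thesis by blast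
qed

lemma lam: "min_cut_size G s t = card P"
proof -
  obtain C where C: "st_cut G s t C" "card C = card P" using menger by blast
  have fin: "finite (card ` {X. st_cut G s t X})"
  proof -
    have "{X. st_cut G s t X} \<subseteq> Pow (arcs G)" by (auto simp: st_cut_def)
    then have "finite {X. st_cut G s t X}" by (rule finite_subset) (use finite_arcs in simp)
    then show ?thesis by simp
  qed
  show ?thesis unfolding min_cut_size_def
  proof (rule Min_eqI[OF fin])
    show "card P \<in> card ` {X. st_cut G s t X}" by (rule image_eqI[of _ _ C]) (use C in auto)
  qed (use cut_card_ge in auto)
qed

lemma mc_cut: "X \<in> min_cuts G s t \<Longrightarrow> st_cut G s t X"
  by (simp add: min_cuts_def)
lemma mc_card: "X \<in> min_cuts G s t \<Longrightarrow> card X = card P"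
  by (simp add: min_cuts_def lam)
lemma mc_arcs: "X \<in> min_cuts G s t \<Longrightarrow> X \<subseteq> arcs G"
  by (simp add: min_cuts_def st_cut_def)
lemma mcI: "st_cut G s t X \<Longrightarrow> card X \<le> card P \<Longrightarrow> X \<in> min_cuts G s t"
  using cut_card_ge[of X] by (simp add: min_cuts_def lam)

lemma mc_struct:
  assumes "X \<in> min_cuts G s t"
  shows "\<exists>f. (\<forall>p\<in>P. f p \<in> X \<inter> set p) \<and> X = f ` P"
proof -
  have cut: "st_cut G s t X" using assms by (rule mc_cut)
  have "\<forall>p\<in>P. \<exists>e. e \<in> X \<inter> set p"
  proof
    fix p assume "p \<in> P"
    then have "set p \<inter> X \<noteq> {}" using cut P_apath by (auto simp: st_cut_def)
    then show "\<exists>e. e \<in> X \<inter> set p" by blast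
  qed
  then obtain f where f: "\<And>p. p \<in> P \<Longrightarrow> f p \<in> X \<inter> set p" by metis
  have "inj_on f P"
  proof (rule inj_onI)
    fix p q assume "p \<in> P" "q \<in> P" "f p = f q"
    then show "p = q" using f[of p] f[of q] P_disj[of p q] by auto
  qed
  then have "card (f ` P) = card X" using mc_card[OF assms] by (simp add: card_image)
  moreover have "f ` P \<subseteq> X" using f by auto
  moreover have "finite X" using mc_arcs[OF assms] finite_arcs by (rule finite_subset)
  ultimately have "f ` P = X" using card_subset_eq[of X "f ` P"] by simp
  then show ?thesis using f by blast
qed

definition pos :: "'e list \<Rightarrow> 'e set \<Rightarrow> nat" where
  "pos p X = (LEAST i. i < length p \<and> p ! i \<in> X)"

lemma pos_props:
  assumes "X \<in> min_cuts G s t" "p \<in> P"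
  shows "pos p X < length p" "p ! pos p X \<in> X" "\<And>i. i < length p \<Longrightarrow> p ! i \<in> X \<longleftrightarrow> i = pos p X"
proof -
  obtain f where f: "\<forall>p\<in>P. f p \<in> X \<inter> set p" "X = f ` P" using mc_struct[OF assms(1)] by blast
  have uniq: "e = f p" if th: "e \<in> X" "e \<in> set p" for e
  proof -
    obtain q where q: "q \<in> P" "e = f q" using f(2) th(1) by blast
    then have "e \<in> set q" using f(1) by auto
    then have "q = p" using P_disj[of p q] q assms(2) th by auto
    then show ?thesis using q by simp
  qed
  obtain i where i: "i < length p" "p ! i = f p" using f(1) assms(2) in_set_conv_nth[of "f p" p] by auto
  have ex: "\<exists>i. i < length p \<and> p ! i \<in> X" using i f(1) assms(2) by auto
  show 1: "pos p X < length p" "p ! pos p X \<in> X" unfolding pos_def using LeastI_ex[OF ex] by auto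
  have dp: "distinct p" using P_distinct assms(2) by blast
  fix j assume j: "j < length p"
  show "p ! j \<in> X \<longleftrightarrow> j = pos p X"
  proof
    assume "p ! j \<in> X"
    then have "p ! j = f p" using uniq j by simp
    moreover have "p ! pos p X = f p" using uniq 1 by simp
    ultimately show "j = pos p X" using nth_eq_iff_index_eq[OF dp j 1(1)] by simp
  next
    assume "j = pos p X" then show "p ! j \<in> X" using 1 by simp
  qed
qed

lemma mc_img: "X \<in> min_cuts G s t \<Longrightarrow> X = (\<lambda>p. p ! pos p X) ` P"
proof -
  assume X: "X \<in> min_cuts G s t"
  obtain f where f: "\<forall>p\<in>P. f p \<in> X \<inter> set p" "X = f ` P" using mc_struct[OF X] by blast
  have "f p = p ! pos p X" if th: "p \<in> P" for p
  proof -
    obtain i where i: "i < length p" "p ! i = f p" using f(1) th in_set_conv_nth[of "f p" p] by auto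
    then have "i = pos p X" using pos_props(3)[OF X th i(1)] f(1) th by auto
    then show ?thesis using i by simp
  qed
  then show "X = (\<lambda>p. p ! pos p X) ` P" using f(2) by auto
qed

lemma mc_eq: "X \<in> min_cuts G s t \<Longrightarrow> Y \<in> min_cuts G s t \<Longrightarrow> (\<forall>p\<in>P. pos p X = pos p Y) \<Longrightarrow> X = Y"
proof -
  assume a: "X \<in> min_cuts G s t" "Y \<in> min_cuts G s t" "\<forall>p\<in>P. pos p X = pos p Y"
  have "(\<lambda>p. p ! pos p X) ` P = (\<lambda>p. p ! pos p Y) ` P" by (rule image_cong) (use a in auto)
  then show "X = Y" using mc_img[OF a(1)] mc_img[OF a(2)] by simp
qed

end


lemma set_take_nth: "x \<in> set (take n xs) \<Longrightarrow> \<exists>j<n. j < length xs \<and> x = xs ! j"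
  by (auto simp: in_set_conv_nth)

lemma set_drop_nth: "x \<in> set (drop n xs) \<Longrightarrow> \<exists>j. n \<le> j \<and> j < length xs \<and> x = xs ! j"
proof -
  assume "x \<in> set (drop n xs)"
  then obtain k where "k < length (drop n xs)" "drop n xs ! k = x" by (auto simp: in_set_conv_nth)
  then show ?thesis by (intro exI[of _ "n + k"]) auto
qed

context mg begin

lemma awalk_take:
  assumes "awalk u q v" "i < length q"
  shows "awalk u (take (Suc i) q) (head G (q ! i))"
proof -
  have "q = take (Suc i) q @ drop (Suc i) q" by simp
  then have "awalk u (take (Suc i) q @ drop (Suc i) q) v" using assms(1) by simp
  then have "awalk u (take (Suc i) q) (awlast u (take (Suc i) q))" by (simp only: awalk_append_iff)
  moreover have "awlast u (take (Suc i) q) = head G (q ! i)"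
    using assms(2) by (simp add: take_Suc_conv_app_nth awalk_verts_conv)
  ultimately show ?thesis by simp
qed

lemma awalk_drop:
  assumes "awalk u q v" "i < length q"
  shows "awalk (head G (q ! i)) (drop (Suc i) q) v"
proof -
  have "q = take (Suc i) q @ drop (Suc i) q" by simp
  then have "awalk u (take (Suc i) q @ drop (Suc i) q) v" using assms(1) by simp
  then have "awalk (awlast u (take (Suc i) q)) (drop (Suc i) q) v" by (simp only: awalk_append_iff)
  moreover have "awlast u (take (Suc i) q) = head G (q ! i)"
    using assms(2) by (simp add: take_Suc_conv_app_nth awalk_verts_conv)
  ultimately show ?thesis by simp
qed

lemma awalk_drop_tail:
  assumes "awalk u q v" "i < length q"
  shows "awalk (tail G (q ! i)) (drop i q) v"
proof -
  have "drop i q = q ! i # drop (Suc i) q" using assms(2) by (simp add: Cons_nth_drop_Suc)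
  moreover have "q ! i \<in> arcs G" using assms by (auto simp: awalk_def)
  ultimately show ?thesis using awalk_drop[OF assms] by (simp add: awalk_Cons_iff)
qed

lemma le_iff:
  assumes X: "X \<in> min_cuts G s t" and Y: "Y \<in> min_cuts G s t"
  shows "cut_le G s t X Y \<longleftrightarrow> (\<forall>p\<in>P. pos p X \<le> pos p Y)"
proof
  assume "cut_le G s t X Y"
  then show "\<forall>p\<in>P. pos p X \<le> pos p Y" using P_apath by (auto simp: cut_le_def pos_def)
next
  assume le: "\<forall>p\<in>P. pos p X \<le> pos p Y"
  show "cut_le G s t X Y" unfolding cut_le_def pos_def[symmetric]
  proof (intro allI impI)
    fix q assume q: "apath s q t"
    have qw: "awalk s q t" using q by (simp add: apath_def)
    have "set q \<inter> Y \<noteq> {}" using mc_cut[OF Y] q by (simp add: st_cut_def)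
    then have ex: "\<exists>i. i < length q \<and> q ! i \<in> Y" by (auto simp: in_set_conv_nth)
    define i where "i = pos q Y"
    have i: "i < length q" "q ! i \<in> Y" unfolding i_def pos_def using LeastI_ex[OF ex] by auto
    show "pos q X \<le> pos q Y"
    proof (rule ccontr)
      assume "\<not> pos q X \<le> pos q Y"
      then have gt: "i < pos q X" unfolding i_def by simp
      have noX: "q ! j \<notin> X" if "j \<le> i" for j
      proof
        assume "q ! j \<in> X"
        then have "pos q X \<le> j" unfolding pos_def using that i(1) by (intro Least_le) simp
        with gt that show False by simp
      qed
      have "q ! i \<in> (\<lambda>p. p ! pos p Y) ` P" using mc_img[OF Y] i(2) by simp
      then obtain p where p: "p \<in> P" "q ! i = p ! pos p Y" by (auto simp: image_iff)
      have a: "pos p Y < length p" using pos_props(1)[OF Y p(1)] .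
      have ne: "pos p X \<noteq> pos p Y"
      proof
        assume "pos p X = pos p Y"
        then have "q ! i \<in> X" using p pos_props(2)[OF X p(1)] by simp
        with noX show False by simp
      qed
      then have lt: "pos p X < pos p Y" using le p(1) by (simp add: order_less_le)
      have pw: "awalk s p t" using P_apath[OF p(1)] by (simp add: apath_def)
      have w1: "awalk s (take (Suc i) q) (head G (q ! i))" using awalk_take[OF qw i(1)] .
      have w2: "awalk (head G (q ! i)) (drop (Suc (pos p Y)) p) t" using awalk_drop[OF pw a] p(2) by simp
      have w: "awalk s (take (Suc i) q @ drop (Suc (pos p Y)) p) t" using w1 w2 by (rule awalk_appendI)
      have "set (take (Suc i) q @ drop (Suc (pos p Y)) p) \<inter> X = {}"
      proof -
        { fix x assume xin: "x \<in> set (take (Suc i) q)" "x \<in> X"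
          obtain j where "j < Suc i" "x = q ! j" using set_take_nth[OF xin(1)] by blast
          then have False using noX \<open>x \<in> X\<close> by simp }
        moreover
        { fix x assume xin: "x \<in> set (drop (Suc (pos p Y)) p)" "x \<in> X"
          obtain j where j: "Suc (pos p Y) \<le> j" "j < length p" "x = p ! j" using set_drop_nth[OF xin(1)] by blast
          then have "j = pos p X" using pos_props(3)[OF X p(1) j(2)] \<open>x \<in> X\<close> by simp
          with j lt have False by simp }
        ultimately show ?thesis unfolding set_append by blast
      qed
      then show False using walk_hits[OF mc_cut[OF X] w] by simp
    qed
  qed
qed

lemma mk_cut:
  assumes g: "\<forall>p\<in>P. g p < length p" and cut: "st_cut G s t ((\<lambda>p. p ! g p) ` P)"
  shows "(\<lambda>p. p ! g p) ` P \<in> min_cuts G s t" "\<forall>p\<in>P. pos p ((\<lambda>p. p ! g p) ` P) = g p"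
proof -
  show Z: "(\<lambda>p. p ! g p) ` P \<in> min_cuts G s t" using cut finP by (intro mcI) (auto simp: card_image_le)
  show "\<forall>p\<in>P. pos p ((\<lambda>p. p ! g p) ` P) = g p"
  proof
    fix p assume p: "p \<in> P"
    show "pos p ((\<lambda>p. p ! g p) ` P) = g p" using pos_props(3)[OF Z p, of "g p"] g p by auto
  qed
qed

end

context mg begin

definition Zmx where "Zmx X Y = (\<lambda>p. p ! max (pos p X) (pos p Y)) ` P"
definition Zmn where "Zmn X Y = (\<lambda>p. p ! min (pos p X) (pos p Y)) ` P"

lemma Zmx_comm: "Zmx X Y = Zmx Y X" unfolding Zmx_def by (simp add: max.commute)
lemma Zmn_comm: "Zmn X Y = Zmn Y X" unfolding Zmn_def by (simp add: min.commute)

lemma step_max: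
  assumes X: "X \<in> min_cuts G s t" and Y: "Y \<in> min_cuts G s t"
    and w: "awalk s w (tail G e)" "set w \<inter> X = {}" and e: "e \<in> arcs G" "e \<notin> Zmx X Y"
  shows "\<exists>w'. awalk s w' (head G e) \<and> (set w' \<inter> X = {} \<or> set w' \<inter> Y = {})"
proof (cases "e \<in> X")
  case False
  have "awalk s (w @ [e]) (head G e)" using w(1) arc_implies_awalk[OF e(1)] by (rule awalk_appendI)
  moreover have "set (w @ [e]) \<inter> X = {}" using w(2) False by auto
  ultimately show ?thesis by blast
next
  case True
  have "e \<in> (\<lambda>p. p ! pos p X) ` P" using mc_img[OF X] True by simp
  then obtain p where p: "p \<in> P" "e = p ! pos p X" by (auto simp: image_iff)
  have ne: "pos p X \<noteq> max (pos p X) (pos p Y)"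
  proof
    assume h: "pos p X = max (pos p X) (pos p Y)"
    have "e = p ! max (pos p X) (pos p Y)" using p(2) h by simp
    then have "e \<in> Zmx X Y" unfolding Zmx_def using p(1) by (rule image_eqI)
    with e show False by simp
  qed
  then have lt: "pos p X < pos p Y" by (simp add: max_def split: if_splits)
  have pw: "awalk s p t" using P_apath[OF p(1)] by (simp add: apath_def)
  have a: "pos p X < length p" using pos_props(1)[OF X p(1)] .
  have "awalk s (take (Suc (pos p X)) p) (head G e)" using awalk_take[OF pw a] p(2) by simp
  moreover have "set (take (Suc (pos p X)) p) \<inter> Y = {}"
  proof -
    { fix x assume xin: "x \<in> set (take (Suc (pos p X)) p)" "x \<in> Y"
      obtain j where j: "j < Suc (pos p X)" "j < length p" "x = p ! j" using set_take_nth[OF xin(1)] by blast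
      then have "j = pos p Y" using pos_props(3)[OF Y p(1) j(2)] xin(2) by simp
      with j lt have False by simp }
    then show ?thesis by blast
  qed
  ultimately show ?thesis by blast
qed

lemma max_cut:
  assumes X: "X \<in> min_cuts G s t" and Y: "Y \<in> min_cuts G s t"
  shows "st_cut G s t (Zmx X Y)"
  unfolding st_cut_def
proof (intro conjI allI impI)
  show "Zmx X Y \<subseteq> arcs G" unfolding Zmx_def
  proof
    fix x assume "x \<in> (\<lambda>p. p ! max (pos p X) (pos p Y)) ` P"
    then obtain p where p: "p \<in> P" "x = p ! max (pos p X) (pos p Y)" by auto
    have "max (pos p X) (pos p Y) < length p" using pos_props(1)[OF X p(1)] pos_props(1)[OF Y p(1)] by simp
    then show "x \<in> arcs G" using p P_arcs[OF p(1)] by (auto simp: subset_iff)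
  qed
  fix q assume q: "apath s q t"
  show "set q \<inter> Zmx X Y \<noteq> {}"
  proof
    assume qZ: "set q \<inter> Zmx X Y = {}"
    define R where "R = {v. \<exists>w. awalk s w v \<and> (set w \<inter> X = {} \<or> set w \<inter> Y = {})}"
    have sR: "s \<in> R" unfolding R_def using s_in by (intro CollectI exI[of _ "[]"]) (simp add: awalk_Nil_iff)
    have tR: "t \<notin> R" unfolding R_def using walk_hits[OF mc_cut[OF X]] walk_hits[OF mc_cut[OF Y]] by blast
    have "cas s q t" "set q \<subseteq> arcs G" using q by (auto simp: apath_def awalk_def)
    then obtain e where e: "e \<in> set q" "tail G e \<in> R" "head G e \<notin> R" using cas_exit[of G s q t R] sR tR by blast
    have ea: "e \<in> arcs G" using e(1) \<open>set q \<subseteq> arcs G\<close> by blast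
    have eZ: "e \<notin> Zmx X Y" using qZ e(1) by blast
    obtain w where w: "awalk s w (tail G e)" "set w \<inter> X = {} \<or> set w \<inter> Y = {}" using e(2) unfolding R_def by blast
    from w(2) have "\<exists>w'. awalk s w' (head G e) \<and> (set w' \<inter> X = {} \<or> set w' \<inter> Y = {})"
    proof
      assume "set w \<inter> X = {}"
      then show ?thesis using step_max[OF X Y w(1) _ ea eZ] by blast
    next
      assume "set w \<inter> Y = {}"
      then show ?thesis using step_max[OF Y X w(1) _ ea] eZ Zmx_comm by blast
    qed
    then have "head G e \<in> R" unfolding R_def by blast
    with e show False by simp
  qed
qed

lemma step_min:
  assumes X: "X \<in> min_cuts G s t" and Y: "Y \<in> min_cuts G s t"
    and w: "awalk (head G e) w t" "set w \<inter> X = {}" and e: "e \<in> arcs G" "e \<notin> Zmn X Y"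
  shows "\<exists>w'. awalk (tail G e) w' t \<and> (set w' \<inter> X = {} \<or> set w' \<inter> Y = {})"
proof (cases "e \<in> X")
  case False
  have "awalk (tail G e) (e # w) t" using w(1) e(1) by (simp add: awalk_Cons_iff)
  moreover have "set (e # w) \<inter> X = {}" using w(2) False by auto
  ultimately show ?thesis by blast
next
  case True
  have "e \<in> (\<lambda>p. p ! pos p X) ` P" using mc_img[OF X] True by simp
  then obtain p where p: "p \<in> P" "e = p ! pos p X" by (auto simp: image_iff)
  have ne: "pos p X \<noteq> min (pos p X) (pos p Y)"
  proof
    assume h: "pos p X = min (pos p X) (pos p Y)"
    have "e = p ! min (pos p X) (pos p Y)" using p(2) h by simp
    then have "e \<in> Zmn X Y" unfolding Zmn_def using p(1) by (rule image_eqI)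
    with e show False by simp
  qed
  then have lt: "pos p Y < pos p X" by (simp add: min_def split: if_splits)
  have pw: "awalk s p t" using P_apath[OF p(1)] by (simp add: apath_def)
  have a: "pos p X < length p" using pos_props(1)[OF X p(1)] .
  have "awalk (tail G e) (drop (pos p X) p) t" using awalk_drop_tail[OF pw a] p(2) by simp
  moreover have "set (drop (pos p X) p) \<inter> Y = {}"
  proof -
    { fix x assume xin: "x \<in> set (drop (pos p X) p)" "x \<in> Y"
      obtain j where j: "pos p X \<le> j" "j < length p" "x = p ! j" using set_drop_nth[OF xin(1)] by blast
      then have "j = pos p Y" using pos_props(3)[OF Y p(1) j(2)] xin(2) by simp
      with j lt have False by simp }
    then show ?thesis by blast
  qed
  ultimately show ?thesis by blast
qed

lemma min_cut:
  assumes X: "X \<in> min_cuts G s t" and Y: "Y \<in> min_cuts G s t"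
  shows "st_cut G s t (Zmn X Y)"
  unfolding st_cut_def
proof (intro conjI allI impI)
  show "Zmn X Y \<subseteq> arcs G" unfolding Zmn_def
  proof
    fix x assume "x \<in> (\<lambda>p. p ! min (pos p X) (pos p Y)) ` P"
    then obtain p where p: "p \<in> P" "x = p ! min (pos p X) (pos p Y)" by auto
    have "min (pos p X) (pos p Y) < length p" using pos_props(1)[OF X p(1)] pos_props(1)[OF Y p(1)] by simp
    then show "x \<in> arcs G" using p P_arcs[OF p(1)] by (auto simp: subset_iff)
  qed
  fix q assume q: "apath s q t"
  show "set q \<inter> Zmn X Y \<noteq> {}"
  proof
    assume qZ: "set q \<inter> Zmn X Y = {}"
    define R where "R = {v. \<exists>w. awalk v w t \<and> (set w \<inter> X = {} \<or> set w \<inter> Y = {})}"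
    have tR: "t \<in> R" unfolding R_def using t_in by (intro CollectI exI[of _ "[]"]) (simp add: awalk_Nil_iff)
    have sR: "s \<notin> R" unfolding R_def using walk_hits[OF mc_cut[OF X]] walk_hits[OF mc_cut[OF Y]] by blast
    have "cas s q t" "set q \<subseteq> arcs G" using q by (auto simp: apath_def awalk_def)
    then obtain e where e: "e \<in> set q" "tail G e \<in> - R" "head G e \<notin> - R" using cas_exit[of G s q t "- R"] sR tR by blast
    have ea: "e \<in> arcs G" using e(1) \<open>set q \<subseteq> arcs G\<close> by blast
    have eZ: "e \<notin> Zmn X Y" using qZ e(1) by blast
    obtain w where w: "awalk (head G e) w t" "set w \<inter> X = {} \<or> set w \<inter> Y = {}" using e(3) unfolding R_def by blast
    from w(2) have "\<exists>w'. awalk (tail G e) w' t \<and> (set w' \<inter> X = {} \<or> set w' \<inter> Y = {})"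
    proof
      assume "set w \<inter> X = {}"
      then show ?thesis using step_min[OF X Y w(1) _ ea eZ] by blast
    next
      assume "set w \<inter> Y = {}"
      then show ?thesis using step_min[OF Y X w(1) _ ea] eZ Zmn_comm by blast
    qed
    then have "tail G e \<in> R" unfolding R_def by blast
    with e show False by simp
  qed
qed

end

context mg begin

lemma smax_eq:
  assumes X: "X \<in> min_cuts G s t" and Y: "Y \<in> min_cuts G s t"
  shows "S_max P (X \<union> Y) = Zmx X Y"
  unfolding S_max_def Zmx_def
proof (rule image_cong[OF refl])
  fix p assume p: "p \<in> P"
  have l: "max (pos p X) (pos p Y) < length p" using pos_props(1)[OF X p] pos_props(1)[OF Y p] by simp
  have "(GREATEST i. i < length p \<and> p ! i \<in> X \<union> Y) = max (pos p X) (pos p Y)"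
  proof (rule Greatest_equality)
    show "max (pos p X) (pos p Y) < length p \<and> p ! max (pos p X) (pos p Y) \<in> X \<union> Y"
      using l pos_props(2)[OF X p] pos_props(2)[OF Y p] by (simp add: max_def)
    fix y assume "y < length p \<and> p ! y \<in> X \<union> Y"
    then have "y = pos p X \<or> y = pos p Y" using pos_props(3)[OF X p, of y] pos_props(3)[OF Y p, of y] by auto
    then show "y \<le> max (pos p X) (pos p Y)" by auto
  qed
  then show "last_on p (X \<union> Y) = p ! max (pos p X) (pos p Y)" by (simp add: last_on_def)
qed

lemma smin_eq:
  assumes X: "X \<in> min_cuts G s t" and Y: "Y \<in> min_cuts G s t"
  shows "S_min P (X \<union> Y) = Zmn X Y"
  unfolding S_min_def Zmn_def
proof (rule image_cong[OF refl])
  fix p assume p: "p \<in> P"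
  have l: "min (pos p X) (pos p Y) < length p" using pos_props(1)[OF X p] pos_props(1)[OF Y p] by simp
  have "(LEAST i. i < length p \<and> p ! i \<in> X \<union> Y) = min (pos p X) (pos p Y)"
  proof (rule Least_equality)
    show "min (pos p X) (pos p Y) < length p \<and> p ! min (pos p X) (pos p Y) \<in> X \<union> Y"
      using l pos_props(2)[OF X p] pos_props(2)[OF Y p] by (simp add: min_def)
    fix y assume "y < length p \<and> p ! y \<in> X \<union> Y"
    then have "y = pos p X \<or> y = pos p Y" using pos_props(3)[OF X p, of y] pos_props(3)[OF Y p, of y] by auto
    then show "min (pos p X) (pos p Y) \<le> y" by auto
  qed
  then show "first_on p (X \<union> Y) = p ! min (pos p X) (pos p Y)" by (simp add: first_on_def)
qed

lemma jn_props:
  assumes X: "X \<in> min_cuts G s t" and Y: "Y \<in> min_cuts G s t"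
  shows "S_max P (X \<union> Y) \<in> min_cuts G s t" "\<forall>p\<in>P. pos p (S_max P (X \<union> Y)) = max (pos p X) (pos p Y)"
proof -
  have g: "\<forall>p\<in>P. max (pos p X) (pos p Y) < length p" using pos_props(1)[OF X] pos_props(1)[OF Y] by simp
  have c: "st_cut G s t ((\<lambda>p. p ! max (pos p X) (pos p Y)) ` P)" using max_cut[OF X Y] by (simp add: Zmx_def)
  show "S_max P (X \<union> Y) \<in> min_cuts G s t" "\<forall>p\<in>P. pos p (S_max P (X \<union> Y)) = max (pos p X) (pos p Y)"
    using mk_cut[OF g c] smax_eq[OF X Y] by (simp_all add: Zmx_def)
qed

lemma mt_props:
  assumes X: "X \<in> min_cuts G s t" and Y: "Y \<in> min_cuts G s t"
  shows "S_min P (X \<union> Y) \<in> min_cuts G s t" "\<forall>p\<in>P. pos p (S_min P (X \<union> Y)) = min (pos p X) (pos p Y)"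
proof -
  have g: "\<forall>p\<in>P. min (pos p X) (pos p Y) < length p" using pos_props(1)[OF X] pos_props(1)[OF Y] by (auto simp: min_less_iff_disj)
  have c: "st_cut G s t ((\<lambda>p. p ! min (pos p X) (pos p Y)) ` P)" using min_cut[OF X Y] by (simp add: Zmn_def)
  show "S_min P (X \<union> Y) \<in> min_cuts G s t" "\<forall>p\<in>P. pos p (S_min P (X \<union> Y)) = min (pos p X) (pos p Y)"
    using mk_cut[OF g c] smin_eq[OF X Y] by (simp_all add: Zmn_def)
qed

end

context mg begin

lemma U_len: "C \<in> U_lr G s t k \<Longrightarrow> length C = k"
  by (simp add: U_lr_def)
lemma U_nth: "C \<in> U_lr G s t k \<Longrightarrow> i < k \<Longrightarrow> C ! i \<in> min_cuts G s t"
  by (auto simp: U_lr_def)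
lemma U_ord: "C \<in> U_lr G s t k \<Longrightarrow> i < j \<Longrightarrow> j < k \<Longrightarrow> \<forall>p\<in>P. pos p (C ! i) \<le> pos p (C ! j)"
  using le_iff[of "C ! i" "C ! j"] U_nth[of C k i] U_nth[of C k j] by (auto simp: U_lr_def)

lemma U_intro:
  assumes "length C = k" "\<And>i. i < k \<Longrightarrow> C ! i \<in> min_cuts G s t"
    "\<And>i j p. i < j \<Longrightarrow> j < k \<Longrightarrow> p \<in> P \<Longrightarrow> pos p (C ! i) \<le> pos p (C ! j)"
  shows "C \<in> U_lr G s t k"
  unfolding U_lr_def
proof (intro CollectI conjI allI impI)
  show "length C = k" by fact
  show "set C \<subseteq> min_cuts G s t" using assms(1,2) by (auto simp: in_set_conv_nth)
  fix i j assume "i < j \<and> j < k"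
  then show "cut_le G s t (C ! i) (C ! j)" using assms(2,3) le_iff[of "C ! i" "C ! j"] by auto
qed

lemma tle_iff:
  assumes "C \<in> U_lr G s t k" "D \<in> U_lr G s t k"
  shows "tuple_le G s t k C D \<longleftrightarrow> (\<forall>i<k. \<forall>p\<in>P. pos p (C ! i) \<le> pos p (D ! i))"
  unfolding tuple_le_def using le_iff U_nth[OF assms(1)] U_nth[OF assms(2)] by auto

definition jt where "jt C1 C2 = map2 (\<lambda>X Y. S_max P (X \<union> Y)) C1 C2"
definition mtt where "mtt C1 C2 = map2 (\<lambda>X Y. S_min P (X \<union> Y)) C1 C2"

lemma jt_nth: "i < length C1 \<Longrightarrow> i < length C2 \<Longrightarrow> jt C1 C2 ! i = S_max P (C1 ! i \<union> C2 ! i)"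
  by (simp add: jt_def)
lemma mtt_nth: "i < length C1 \<Longrightarrow> i < length C2 \<Longrightarrow> mtt C1 C2 ! i = S_min P (C1 ! i \<union> C2 ! i)"
  by (simp add: mtt_def)

lemma jt_props:
  assumes C1: "C1 \<in> U_lr G s t k" and C2: "C2 \<in> U_lr G s t k"
  shows "jt C1 C2 \<in> U_lr G s t k" "length (jt C1 C2) = k"
    "\<And>i. i < k \<Longrightarrow> jt C1 C2 ! i \<in> min_cuts G s t"
    "\<And>i p. i < k \<Longrightarrow> p \<in> P \<Longrightarrow> pos p (jt C1 C2 ! i) = max (pos p (C1 ! i)) (pos p (C2 ! i))"
proof -
  have l: "length C1 = k" "length C2 = k" using C1 C2 by (auto simp: U_len)
  show len: "length (jt C1 C2) = k" using l by (simp add: jt_def)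
  show mc: "\<And>i. i < k \<Longrightarrow> jt C1 C2 ! i \<in> min_cuts G s t"
    using l jt_nth jn_props(1) U_nth[OF C1] U_nth[OF C2] by simp
  show ps: "\<And>i p. i < k \<Longrightarrow> p \<in> P \<Longrightarrow> pos p (jt C1 C2 ! i) = max (pos p (C1 ! i)) (pos p (C2 ! i))"
    using l jt_nth jn_props(2) U_nth[OF C1] U_nth[OF C2] by simp
  show "jt C1 C2 \<in> U_lr G s t k"
  proof (rule U_intro[OF len mc])
    fix i j p assume "i < j" "j < k" "p \<in> P"
    moreover have "pos p (C1 ! i) \<le> pos p (C1 ! j)" "pos p (C2 ! i) \<le> pos p (C2 ! j)"
      using U_ord[OF C1 \<open>i < j\<close> \<open>j < k\<close>] U_ord[OF C2 \<open>i < j\<close> \<open>j < k\<close>] \<open>p \<in> P\<close> by auto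
    ultimately show "pos p (jt C1 C2 ! i) \<le> pos p (jt C1 C2 ! j)"
      using ps by (auto simp: max_def)
  qed
qed

lemma mtt_props:
  assumes C1: "C1 \<in> U_lr G s t k" and C2: "C2 \<in> U_lr G s t k"
  shows "mtt C1 C2 \<in> U_lr G s t k" "length (mtt C1 C2) = k"
    "\<And>i. i < k \<Longrightarrow> mtt C1 C2 ! i \<in> min_cuts G s t"
    "\<And>i p. i < k \<Longrightarrow> p \<in> P \<Longrightarrow> pos p (mtt C1 C2 ! i) = min (pos p (C1 ! i)) (pos p (C2 ! i))"
proof -
  have l: "length C1 = k" "length C2 = k" using C1 C2 by (auto simp: U_len)
  show len: "length (mtt C1 C2) = k" using l by (simp add: mtt_def)
  show mc: "\<And>i. i < k \<Longrightarrow> mtt C1 C2 ! i \<in> min_cuts G s t"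
    using l mtt_nth mt_props(1) U_nth[OF C1] U_nth[OF C2] by simp
  show ps: "\<And>i p. i < k \<Longrightarrow> p \<in> P \<Longrightarrow> pos p (mtt C1 C2 ! i) = min (pos p (C1 ! i)) (pos p (C2 ! i))"
    using l mtt_nth mt_props(2) U_nth[OF C1] U_nth[OF C2] by simp
  show "mtt C1 C2 \<in> U_lr G s t k"
  proof (rule U_intro[OF len mc])
    fix i j p assume "i < j" "j < k" "p \<in> P"
    moreover have "pos p (C1 ! i) \<le> pos p (C1 ! j)" "pos p (C2 ! i) \<le> pos p (C2 ! j)"
      using U_ord[OF C1 \<open>i < j\<close> \<open>j < k\<close>] U_ord[OF C2 \<open>i < j\<close> \<open>j < k\<close>] \<open>p \<in> P\<close> by auto
    ultimately show "pos p (mtt C1 C2 ! i) \<le> pos p (mtt C1 C2 ! j)"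
      using ps by (auto simp: min_def)
  qed
qed

lemma L_simps[simp]:
  "carrier (L_star G s t k) = U_lr G s t k"
  "le (L_star G s t k) = tuple_le G s t k"
  "eq (L_star G s t k) = (=)"
  by (simp_all add: L_star_def)

lemma tuple_eq:
  assumes "C \<in> U_lr G s t k" "D \<in> U_lr G s t k" "\<And>i p. i < k \<Longrightarrow> p \<in> P \<Longrightarrow> pos p (C ! i) = pos p (D ! i)"
  shows "C = D"
proof (rule nth_equalityI)
  show "length C = length D" using assms by (simp add: U_len)
  fix i assume "i < length C"
  then have i: "i < k" using assms by (simp add: U_len)
  show "C ! i = D ! i" using mc_eq[OF U_nth[OF assms(1) i] U_nth[OF assms(2) i]] assms(3) i by blast
qed

lemma po: "partial_order (L_star G s t k)"
proof (unfold_locales, simp_all)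
  fix x y assume "x \<in> U_lr G s t k" "y \<in> U_lr G s t k" "tuple_le G s t k x y" "tuple_le G s t k y x"
  then show "x = y" using tle_iff by (intro tuple_eq) (auto intro: order.antisym)
next
  fix x assume "x \<in> U_lr G s t k"
  then show "tuple_le G s t k x x" by (simp add: tle_iff)
next
  fix x y z assume "x \<in> U_lr G s t k" "y \<in> U_lr G s t k" "z \<in> U_lr G s t k"
    "tuple_le G s t k x y" "tuple_le G s t k y z"
  then show "tuple_le G s t k x z" using tle_iff by (meson order.trans)
qed

end

context mg begin

lemma jt_least:
  assumes C1: "C1 \<in> U_lr G s t k" and C2: "C2 \<in> U_lr G s t k"
  shows "least (L_star G s t k) (jt C1 C2) (Upper (L_star G s t k) {C1, C2})"
  unfolding least_def Upper_def
proof (intro conjI ballI)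
  note J = jt_props[OF C1 C2]
  show "{u. \<forall>x. x \<in> {C1, C2} \<inter> carrier (L_star G s t k) \<longrightarrow> le (L_star G s t k) x u} \<inter> carrier (L_star G s t k) \<subseteq> carrier (L_star G s t k)"
    by blast
  have "tuple_le G s t k C1 (jt C1 C2)" "tuple_le G s t k C2 (jt C1 C2)"
    using tle_iff[OF C1 J(1)] tle_iff[OF C2 J(1)] J(4) by auto
  then show "jt C1 C2 \<in> {u. \<forall>x. x \<in> {C1, C2} \<inter> carrier (L_star G s t k) \<longrightarrow> le (L_star G s t k) x u} \<inter> carrier (L_star G s t k)"
    using J(1) by auto
  fix W assume "W \<in> {u. \<forall>x. x \<in> {C1, C2} \<inter> carrier (L_star G s t k) \<longrightarrow> le (L_star G s t k) x u} \<inter> carrier (L_star G s t k)"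
  then have W: "W \<in> U_lr G s t k" "tuple_le G s t k C1 W" "tuple_le G s t k C2 W" using C1 C2 by auto
  show "le (L_star G s t k) (jt C1 C2) W"
    using W tle_iff[OF C1 W(1)] tle_iff[OF C2 W(1)] tle_iff[OF J(1) W(1)] J(4) by auto
qed

lemma mtt_greatest:
  assumes C1: "C1 \<in> U_lr G s t k" and C2: "C2 \<in> U_lr G s t k"
  shows "greatest (L_star G s t k) (mtt C1 C2) (Lower (L_star G s t k) {C1, C2})"
  unfolding greatest_def Lower_def
proof (intro conjI ballI)
  note J = mtt_props[OF C1 C2]
  show "{u. \<forall>x. x \<in> {C1, C2} \<inter> carrier (L_star G s t k) \<longrightarrow> le (L_star G s t k) u x} \<inter> carrier (L_star G s t k) \<subseteq> carrier (L_star G s t k)"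
    by blast
  have "tuple_le G s t k (mtt C1 C2) C1" "tuple_le G s t k (mtt C1 C2) C2"
    using tle_iff[OF J(1) C1] tle_iff[OF J(1) C2] J(4) by auto
  then show "mtt C1 C2 \<in> {u. \<forall>x. x \<in> {C1, C2} \<inter> carrier (L_star G s t k) \<longrightarrow> le (L_star G s t k) u x} \<inter> carrier (L_star G s t k)"
    using J(1) by auto
  fix W assume "W \<in> {u. \<forall>x. x \<in> {C1, C2} \<inter> carrier (L_star G s t k) \<longrightarrow> le (L_star G s t k) u x} \<inter> carrier (L_star G s t k)"
  then have W: "W \<in> U_lr G s t k" "tuple_le G s t k W C1" "tuple_le G s t k W C2" using C1 C2 by auto
  show "le (L_star G s t k) W (mtt C1 C2)"
    using W tle_iff[OF W(1) C1] tle_iff[OF W(1) C2] tle_iff[OF W(1) J(1)] J(4) by auto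
qed

lemma join_eq:
  assumes C1: "C1 \<in> U_lr G s t k" and C2: "C2 \<in> U_lr G s t k"
  shows "C1 \<squnion>\<^bsub>L_star G s t k\<^esub> C2 = jt C1 C2"
proof -
  interpret partial_order "L_star G s t k" by (rule po)
  show ?thesis unfolding join_def sup_def
    by (rule someI2[of _ "jt C1 C2"]) (use jt_least[OF C1 C2] least_unique in blast)+
qed

lemma meet_eq:
  assumes C1: "C1 \<in> U_lr G s t k" and C2: "C2 \<in> U_lr G s t k"
  shows "C1 \<sqinter>\<^bsub>L_star G s t k\<^esub> C2 = mtt C1 C2"
proof -
  interpret partial_order "L_star G s t k" by (rule po)
  show ?thesis unfolding meet_def inf_def
    by (rule someI2[of _ "mtt C1 C2"]) (use mtt_greatest[OF C1 C2] greatest_unique in blast)+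
qed

lemma is_lattice: "lattice (L_star G s t k)"
proof (rule lattice.intro)
  show "upper_semilattice (L_star G s t k)"
    by (rule upper_semilattice.intro[OF po]) (unfold_locales, use jt_least in auto)
  show "lower_semilattice (L_star G s t k)"
    by (rule lower_semilattice.intro[OF po]) (unfold_locales, use mtt_greatest in auto)
qed

lemma main:
  "distributive_lattice (L_star G s t k) \<and>
    (\<forall>C1\<in>U_lr G s t k. \<forall>C2\<in>U_lr G s t k.
       C1 \<squnion>\<^bsub>L_star G s t k\<^esub> C2 = map2 (\<lambda>X Y. S_max P (X \<union> Y)) C1 C2 \<and>
       C1 \<sqinter>\<^bsub>L_star G s t k\<^esub> C2 = map2 (\<lambda>X Y. S_min P (X \<union> Y)) C1 C2)"
proof (intro conjI ballI)
  fix C1 C2 assume C1: "C1 \<in> U_lr G s t k" and C2: "C2 \<in> U_lr G s t k"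
  show "C1 \<squnion>\<^bsub>L_star G s t k\<^esub> C2 = map2 (\<lambda>X Y. S_max P (X \<union> Y)) C1 C2"
    using join_eq[OF C1 C2] by (simp add: jt_def)
  show "C1 \<sqinter>\<^bsub>L_star G s t k\<^esub> C2 = map2 (\<lambda>X Y. S_min P (X \<union> Y)) C1 C2"
    using meet_eq[OF C1 C2] by (simp add: mtt_def)
next
  show "distributive_lattice (L_star G s t k)"
    unfolding distributive_lattice_def
  proof (intro conjI ballI)
    show "lattice (L_star G s t k)" by (rule is_lattice)
    fix x y z assume x: "x \<in> carrier (L_star G s t k)" and y: "y \<in> carrier (L_star G s t k)"
      and z: "z \<in> carrier (L_star G s t k)"
    then have x: "x \<in> U_lr G s t k" and y: "y \<in> U_lr G s t k" and z: "z \<in> U_lr G s t k" by auto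
    have yz: "jt y z \<in> U_lr G s t k" by (rule jt_props(1)[OF y z])
    have xy: "mtt x y \<in> U_lr G s t k" by (rule mtt_props(1)[OF x y])
    have xz: "mtt x z \<in> U_lr G s t k" by (rule mtt_props(1)[OF x z])
    have "x \<sqinter>\<^bsub>L_star G s t k\<^esub> (y \<squnion>\<^bsub>L_star G s t k\<^esub> z) = mtt x (jt y z)"
      using join_eq[OF y z] meet_eq[OF x yz] by simp
    also have "\<dots> = jt (mtt x y) (mtt x z)"
    proof (rule tuple_eq[OF mtt_props(1)[OF x yz] jt_props(1)[OF xy xz]])
      fix i p assume i: "i < k" and p: "p \<in> P"
      show "pos p (mtt x (jt y z) ! i) = pos p (jt (mtt x y) (mtt x z) ! i)"
        using mtt_props(4)[OF x yz i p] jt_props(4)[OF y z i p] jt_props(4)[OF xy xz i p]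
          mtt_props(4)[OF x y i p] mtt_props(4)[OF x z i p]
        by (simp add: min_max_distrib2)
    qed
    also have "\<dots> = (x \<sqinter>\<^bsub>L_star G s t k\<^esub> y) \<squnion>\<^bsub>L_star G s t k\<^esub> (x \<sqinter>\<^bsub>L_star G s t k\<^esub> z)"
      using join_eq[OF xy xz] meet_eq[OF x y] meet_eq[OF x z] by simp
    finally show "x \<sqinter>\<^bsub>L_star G s t k\<^esub> (y \<squnion>\<^bsub>L_star G s t k\<^esub> z) = (x \<sqinter>\<^bsub>L_star G s t k\<^esub> y) \<squnion>\<^bsub>L_star G s t k\<^esub> (x \<sqinter>\<^bsub>L_star G s t k\<^esub> z)" .
  qed
qed

end

theorem lemma2:
  fixes G :: "('v,'e) pre_digraph" and s t :: 'v and k :: nat and P :: "'e list set"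
  assumes "fin_digraph G"
    and "s \<in> verts G" and "t \<in> verts G" and "s \<noteq> t"
    and "k \<ge> 1"
    and "max_edge_disjoint_paths G s t P"
  shows "distributive_lattice (L_star G s t k) \<and>
    (\<forall>C1\<in>U_lr G s t k. \<forall>C2\<in>U_lr G s t k.
       C1 \<squnion>\<^bsub>L_star G s t k\<^esub> C2 = map2 (\<lambda>X Y. S_max P (X \<union> Y)) C1 C2 \<and>
       C1 \<sqinter>\<^bsub>L_star G s t k\<^esub> C2 = map2 (\<lambda>X Y. S_min P (X \<union> Y)) C1 C2)"
proof -
  interpret mg G s t P
    using assms by (simp add: mg_def mg_axioms_def)
  show ?thesis by (rule main)
qed

end
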